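(* Let $D$ be a Newton diagram in $2$ variables whose support is exactly $K=\{(a,b)\in\mathbb N_0^2: a+b<d\}$ for some integer $d\ge1$. Then $SC(D)\ge\frac{d+1}{2}$.
   Context: For $m\in\mathbb Z^n$ write $|m|=m_1+\dots+m_n$; $e_1,\dots,e_n$ is the standard basis. A Newton diagram in $n$ variables is a function $D\colon\mathbb Z^n\to\{0,P,N\}$ ($P,N$ formal symbols) whose support $K=D^{-1}(\{P,N\})$ is a finite nonempty subset of $\mathbb N_0^n$. For $a\in\mathbb Z^n$ let $E(a)=\{a,a-e_1,\dots,a-e_n\}$; $E(a)$ is a node of $D$ if the image $D(E(a))$ equals $\{P\}$, $\{N\}$, $\{0,P\}$ or $\{0,N\}$. For $n=2$: a node $E(a)$ is an interior node if no point of $E(a)$ has $D$-value $0$, an edge node if exactly one does, a vertex node if exactly two do; a vertex node is a bottom node if its two $0$-points are $a-e_1$ and $a-e_2$. The weighted surface count is $SC(D)=(\#\text{interior nodes})+\tfrac12\big((\#\text{edge nodes})+(\#\text{vertex nodes})-(\#\text{bottom nodes})\big)$. *)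

theory Defs
  imports Complex_Main
begin

datatype sgn = Z | P | N

type_synonym diagram2 = "int \<times> int \<Rightarrow> sgn"

definition support2 :: "diagram2 \<Rightarrow> (int \<times> int) set" where
  "support2 D = {x. D x \<noteq> Z}"

definition newton_diagram2 :: "diagram2 \<Rightarrow> bool" where
  "newton_diagram2 D \<longleftrightarrow> finite (support2 D) \<and> support2 D \<noteq> {} \<and>
     (\<forall>(u,v)\<in>support2 D. u \<ge> 0 \<and> v \<ge> 0)"

definition Eset :: "int \<times> int \<Rightarrow> (int \<times> int) set" where
  "Eset a = {a, (fst a - 1, snd a), (fst a, snd a - 1)}"

definition is_node :: "diagram2 \<Rightarrow> int \<times> int \<Rightarrow> bool" where
  "is_node D a \<longleftrightarrow> D ` Eset a \<in> {{P}, {N}, {Z, P}, {Z, N}}"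

definition zeros :: "diagram2 \<Rightarrow> int \<times> int \<Rightarrow> nat" where
  "zeros D a = card {x \<in> Eset a. D x = Z}"

definition interior_nodes :: "diagram2 \<Rightarrow> (int \<times> int) set" where
  "interior_nodes D = {a. is_node D a \<and> zeros D a = 0}"

definition edge_nodes :: "diagram2 \<Rightarrow> (int \<times> int) set" where
  "edge_nodes D = {a. is_node D a \<and> zeros D a = 1}"

definition vertex_nodes :: "diagram2 \<Rightarrow> (int \<times> int) set" where
  "vertex_nodes D = {a. is_node D a \<and> zeros D a = 2}"

definition bottom_nodes :: "diagram2 \<Rightarrow> (int \<times> int) set" where
  "bottom_nodes D = {a. a \<in> vertex_nodes D \<and>
     {x \<in> Eset a. D x = Z} = {(fst a - 1, snd a), (fst a, snd a - 1)}}"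

definition SC :: "diagram2 \<Rightarrow> real" where
  "SC D = real (card (interior_nodes D)) +
     (real (card (edge_nodes D)) + real (card (vertex_nodes D))
      - real (card (bottom_nodes D))) / 2"

end

theory Submission
  imports Defs
begin

lemma strip:
  fixes b t :: "nat \<Rightarrow> bool"
  shows "(\<Sum>i<Suc k. of_bool (b i \<noteq> b (Suc i)) :: nat) \<le> of_bool (b 0 = t 0) + of_bool (t k = b (Suc k))
     + (\<Sum>i<k. 2 * of_bool (t i = t (Suc i) \<and> t (Suc i) = b (Suc i)) + of_bool (t i \<noteq> t (Suc i)))"
proof (induction k)
  case 0
  then show ?case by (cases "b 0"; cases "b 1"; cases "t 0") auto
next
  case (Suc k)
  have "of_bool (b (Suc k) \<noteq> b (Suc (Suc k))) + (of_bool (t k = b (Suc k)) :: nat) \<le>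
     of_bool (t (Suc k) = b (Suc (Suc k))) + (2 * of_bool (t k = t (Suc k) \<and> t (Suc k) = b (Suc k)) + of_bool (t k \<noteq> t (Suc k)))"
    by (cases "b (Suc k)"; cases "b (Suc (Suc k))"; cases "t k"; cases "t (Suc k)") auto
  with Suc show ?case by simp
qed

lemma tele:
  fixes g :: "nat \<Rightarrow> nat \<Rightarrow> bool" and n :: nat
  defines "H \<equiv> \<lambda>j. (\<Sum>i<n - j - 1. of_bool (g i j \<noteq> g (Suc i) j) :: nat)"
  defines "R \<equiv> \<lambda>j. of_bool (g 0 j = g 0 (Suc j)) + of_bool (g (n-j-2) (Suc j) = g (n-j-1) j)
      + 2 * (\<Sum>i<n-j-2. of_bool (g i (Suc j) = g (Suc i) (Suc j) \<and> g (Suc i) (Suc j) = g (Suc i) j) :: nat)"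
  shows "j \<le> n - 1 \<Longrightarrow> H 0 \<le> (\<Sum>j'<j. R j') + H j"
proof (induction j)
  case 0
  then show ?case by simp
next
  case (Suc j)
  define k where "k = n - j - 2"
  have nk: "n - j - 1 = Suc k" "n - Suc j - 1 = k" "n - j - 2 = k" using Suc.prems by (auto simp: k_def)
  have s: "H j \<le> R j + H (Suc j)"
    using strip[of "\<lambda>i. g i j" k "\<lambda>i. g i (Suc j)"]
    unfolding H_def R_def nk by (simp add: sum.distrib sum_distrib_left)
  from Suc show ?case using s by simp
qed

lemma main_count:
  fixes g :: "nat \<Rightarrow> nat \<Rightarrow> bool" and n :: nat
  shows "n - 1 \<le> (\<Sum>i<n-1. of_bool (g i 0 = g (Suc i) 0) :: nat) +
     (\<Sum>j<n-1. of_bool (g 0 j = g 0 (Suc j)) + of_bool (g (n-j-2) (Suc j) = g (n-j-1) j)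
      + 2 * (\<Sum>i<n-j-2. of_bool (g i (Suc j) = g (Suc i) (Suc j) \<and> g (Suc i) (Suc j) = g (Suc i) j)))"
proof -
  have t: "(\<Sum>i<n - 0 - 1. of_bool (g i 0 \<noteq> g (Suc i) 0) :: nat) \<le> (\<Sum>j<n-1. of_bool (g 0 j = g 0 (Suc j)) + of_bool (g (n-j-2) (Suc j) = g (n-j-1) j)
      + 2 * (\<Sum>i<n-j-2. of_bool (g i (Suc j) = g (Suc i) (Suc j) \<and> g (Suc i) (Suc j) = g (Suc i) j))) + (\<Sum>i<n - (n-1) - 1. of_bool (g i (n-1) \<noteq> g (Suc i) (n-1)))"
    using tele[where g=g and n=n and j="n-1"] by simp 
  have "(\<Sum>i<n-1. of_bool (g i 0 = g (Suc i) 0) :: nat) + (\<Sum>i<n-1. of_bool (g i 0 \<noteq> g (Suc i) 0)) = (\<Sum>i<n-1. 1)"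
    unfolding sum.distrib[symmetric] by (rule sum.cong) auto
  then show ?thesis using t by simp
qed

lemma main_count2:
  fixes g :: "nat \<Rightarrow> nat \<Rightarrow> bool" and n :: nat
  shows "n - 1 \<le> card {i. i<n-1 \<and> g i 0 = g (Suc i) 0} + card {j. j<n-1 \<and> g 0 j = g 0 (Suc j)}
    + card {j. j<n-1 \<and> g (n-j-2) (Suc j) = g (n-j-1) j}
    + 2 * card {(j,i). j<n-1 \<and> i<n-j-2 \<and> g i (Suc j) = g (Suc i) (Suc j) \<and> g (Suc i) (Suc j) = g (Suc i) j}"
proof -
  have c: "(\<Sum>i<m. of_bool (P i) :: nat) = card {i. i<m \<and> P i}" for m :: nat and P
  proof -
    have "{..<m} \<inter> {i. P i} = {i. i<m \<and> P i}" by auto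
    then show ?thesis by simp
  qed
  have dd: "(\<Sum>j<n-1. \<Sum>i<n-j-2. of_bool (g i (Suc j) = g (Suc i) (Suc j) \<and> g (Suc i) (Suc j) = g (Suc i) j) :: nat)
     = card {(j,i). j<n-1 \<and> i<n-j-2 \<and> g i (Suc j) = g (Suc i) (Suc j) \<and> g (Suc i) (Suc j) = g (Suc i) j}"
  proof -
    have "(\<Sum>j<n-1. \<Sum>i<n-j-2. of_bool (g i (Suc j) = g (Suc i) (Suc j) \<and> g (Suc i) (Suc j) = g (Suc i) j) :: nat)
      = (\<Sum>(j,i)\<in>(SIGMA j:{..<n-1}. {..<n-j-2}). of_bool (g i (Suc j) = g (Suc i) (Suc j) \<and> g (Suc i) (Suc j) = g (Suc i) j))"
      by (rule sum.Sigma) auto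
    also have "\<dots> = (\<Sum>p\<in>(SIGMA j:{..<n-1}. {..<n-j-2}). of_bool ((\<lambda>(j,i). g i (Suc j) = g (Suc i) (Suc j) \<and> g (Suc i) (Suc j) = g (Suc i) j) p))"
      by (rule sum.cong) auto
    also have "\<dots> = card ((SIGMA j:{..<n-1}. {..<n-j-2}) \<inter> {p. (\<lambda>(j,i). g i (Suc j) = g (Suc i) (Suc j) \<and> g (Suc i) (Suc j) = g (Suc i) j) p})"
      by (subst sum_of_bool_eq) auto
    also have "(SIGMA j:{..<n-1}. {..<n-j-2}) \<inter> {p. (\<lambda>(j,i). g i (Suc j) = g (Suc i) (Suc j) \<and> g (Suc i) (Suc j) = g (Suc i) j) p}
       = {(j,i). j<n-1 \<and> i<n-j-2 \<and> g i (Suc j) = g (Suc i) (Suc j) \<and> g (Suc i) (Suc j) = g (Suc i) j}" by auto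
    finally show ?thesis .
  qed
  show ?thesis using main_count[of n g] unfolding sum.distrib sum_distrib_left[symmetric] unfolding dd unfolding c by simp
qed


lemma mk_edge:
  assumes "Eset a = {p,q,r}" "p\<noteq>q" "p\<noteq>r" "q\<noteq>r" "D p = Z" "D q = D r" "D q \<noteq> Z"
  shows "a \<in> edge_nodes D"
proof -
  have "D ` Eset a = {Z, D q}" using assms by auto
  moreover have "D q = P \<or> D q = N" using assms(7) by (cases "D q") auto
  ultimately have "is_node D a" unfolding is_node_def by auto
  moreover have "{x \<in> Eset a. D x = Z} = {p}" using assms by auto
  ultimately show ?thesis unfolding edge_nodes_def zeros_def by simp
qed

lemma mk_int:
  assumes "Eset a = {p,q,r}" "D p = D q" "D q = D r" "D q \<noteq> Z"
  shows "a \<in> interior_nodes D"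
proof -
  have "D ` Eset a = {D q}" using assms by auto
  moreover have "D q = P \<or> D q = N" using assms(4) by (cases "D q") auto
  ultimately have "is_node D a" unfolding is_node_def by auto
  moreover have "{x \<in> Eset a. D x = Z} = {}" using assms by auto
  hence "zeros D a = 0" unfolding zeros_def by (simp only: card.empty)
  ultimately show ?thesis unfolding interior_nodes_def by simp
qed

lemma mk_vert:
  assumes "Eset a = {p,q,r}" "p\<noteq>q" "p\<noteq>r" "q\<noteq>r" "D p = Z" "D q = Z" "D r \<noteq> Z"
    "p \<notin> {(fst a - 1, snd a), (fst a, snd a - 1)}"
  shows "a \<in> vertex_nodes D - bottom_nodes D"
proof -
  have "D ` Eset a = {Z, D r}" using assms by auto
  moreover have "D r = P \<or> D r = N" using assms(7) by (cases "D r") auto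
  ultimately have "is_node D a" unfolding is_node_def by auto
  moreover have zz: "{x \<in> Eset a. D x = Z} = {p,q}" using assms by auto
  moreover have "card {p,q} = 2" using assms by simp
  ultimately show ?thesis unfolding vertex_nodes_def bottom_nodes_def zeros_def using assms(8) by auto
qed

lemma node_sub:
  assumes "is_node D a"
  shows "a \<in> support2 D \<union> (\<lambda>(x,y). (x+1,y)) ` support2 D \<union> (\<lambda>(x,y). (x,y+1)) ` support2 D"
proof (rule ccontr)
  obtain x y where a: "a = (x,y)" by (cases a)
  assume "\<not> ?thesis"
  hence "D (x,y) = Z" "D (x-1,y) = Z" "D (x,y-1) = Z"
    unfolding a support2_def
    by (auto simp: image_iff split: prod.splits)
  hence "D ` Eset a = {Z}" unfolding Eset_def a by auto
  with assms show False unfolding is_node_def by auto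
qed

lemma nodes_finite:
  assumes "finite (support2 D)" "A \<subseteq> {a. is_node D a}"
  shows "finite A"
proof -
  have "A \<subseteq> support2 D \<union> (\<lambda>(x,y). (x+1,y)) ` support2 D \<union> (\<lambda>(x,y). (x,y+1)) ` support2 D"
    using assms(2) node_sub by blast
  then show ?thesis by (rule finite_subset) (use assms(1) in auto)
qed

lemma arith2: "(x::real) - 1 \<le> e + 2*i \<Longrightarrow> b + 2 \<le> v \<Longrightarrow> (x+1)/2 \<le> i + (e + v - b)/2"
  by (simp add: field_simps)

lemma sgn_eq: "(x::sgn) \<noteq> Z \<Longrightarrow> y \<noteq> Z \<Longrightarrow> (x = P) = (y = P) \<Longrightarrow> x = y"
  by (cases x; cases y) auto

theorem mainTheorem8:
  fixes D :: diagram2 and d :: int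
  assumes "newton_diagram2 D"
    and "d \<ge> 1"
    and "support2 D = {(a, b). a \<ge> 0 \<and> b \<ge> 0 \<and> a + b < d}"
  shows "SC D \<ge> (real_of_int d + 1) / 2"
proof -
  define n where "n = nat d"
  have dn: "d = int n" "n \<ge> 1" using assms(2) by (auto simp: n_def)
  have supp: "D (x,y) = Z \<longleftrightarrow> \<not> (x \<ge> 0 \<and> y \<ge> 0 \<and> x + y < int n)" for x y
  proof -
    have "(x,y) \<in> support2 D \<longleftrightarrow> (x \<ge> 0 \<and> y \<ge> 0 \<and> x + y < int n)" using assms(3) dn by auto
    then show ?thesis unfolding support2_def by auto
  qed
  have fin: "finite (support2 D)" using assms(1) newton_diagram2_def by auto
  define g where "g i j = (D (int i, int j) = P)" for i j
  have gS: "g (Suc i) (Suc j) = (D (int i + 1, int j + 1) = P)" "g (Suc i) j = (D (int i + 1, int j) = P)"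
    "g i (Suc j) = (D (int i, int j + 1) = P)" "g i j = (D (int i, int j) = P)" for i j
    by (simp_all add: g_def add.commute)
  define SB where "SB = {i. i<n-1 \<and> g i 0 = g (Suc i) 0}"
  define SL where "SL = {j. j<n-1 \<and> g 0 j = g 0 (Suc j)}"
  define SH where "SH = {j. j<n-1 \<and> g (n-j-2) (Suc j) = g (n-j-1) j}"
  define SI where "SI = {(j,i). j<n-1 \<and> i<n-j-2 \<and> g i (Suc j) = g (Suc i) (Suc j) \<and> g (Suc i) (Suc j) = g (Suc i) j}"
  have cnt: "n - 1 \<le> card SB + card SL + card SH + 2*card SI"
    using main_count2[of n g] unfolding SB_def SL_def SH_def SI_def by simp
  define fB where "fB = (\<lambda>i::nat. (int i + 1, 0::int))"
  define fL where "fL = (\<lambda>j::nat. (0::int, int j + 1))"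
  define fH where "fH = (\<lambda>j::nat. (int (n - j - 1), int j + 1))"
  define fI where "fI = (\<lambda>(j::nat,i::nat). (int i + 1, int j + 1))"
  have finSB: "finite SB" "finite SL" "finite SH" unfolding SB_def SL_def SH_def by auto
  have finSI: "finite SI"
    by (rule finite_subset[of _ "{..<n} \<times> {..<n}"]) (auto simp: SI_def)
  have B: "fB ` SB \<subseteq> edge_nodes D"
  proof
    fix a assume "a \<in> fB ` SB" then obtain i where i: "i < n - 1" "g i 0 = g (Suc i) 0" "a = fB i"
      by (auto simp: SB_def)
    show "a \<in> edge_nodes D"
    proof (rule mk_edge[where p="(int i + 1, -1)" and q = "(int i + 1, 0)" and r = "(int i, 0)"])
      show "Eset a = {(int i + 1, -1), (int i + 1, 0), (int i, 0)}" using i by (auto simp: Eset_def fB_def)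
      show "D (int i + 1, -1) = Z" using supp by simp
      show "D (int i + 1, 0) \<noteq> Z" using supp i by simp
      show "D (int i + 1, 0) = D (int i, 0)"
        by (rule sgn_eq) (use supp i i(2)[unfolded gS(2)[of i 0] gS(4)[of i 0]] in auto)
    qed auto
  qed
  have L: "fL ` SL \<subseteq> edge_nodes D"
  proof
    fix a assume "a \<in> fL ` SL" then obtain j where j: "j < n - 1" "g 0 j = g 0 (Suc j)" "a = fL j"
      by (auto simp: SL_def)
    show "a \<in> edge_nodes D"
    proof (rule mk_edge[where p="(-1, int j + 1)" and q = "(0, int j + 1)" and r = "(0, int j)"])
      show "Eset a = {(-1, int j + 1), (0, int j + 1), (0, int j)}" using j by (auto simp: Eset_def fL_def)
      show "D (-1, int j + 1) = Z" using supp by simp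
      show "D (0, int j + 1) \<noteq> Z" using supp j by simp
      show "D (0, int j + 1) = D (0, int j)"
        by (rule sgn_eq) (use supp j j(2)[unfolded gS(3)[of 0 j] gS(4)[of 0 j]] in auto)
    qed auto
  qed
  have H: "fH ` SH \<subseteq> edge_nodes D"
  proof
    fix a assume "a \<in> fH ` SH" then obtain j where j: "j < n - 1" "g (n-j-2) (Suc j) = g (n-j-1) j" "a = fH j"
      by (auto simp: SH_def)
    define k where "k = n - j - 2"
    have k: "n = j + k + 2" using j(1) unfolding k_def by arith
    have j2: "g k (Suc j) = g (Suc k) j" "a = (int k + 1, int j + 1)" using j k by (auto simp: fH_def)
    show "a \<in> edge_nodes D"
    proof (rule mk_edge[where p="(int k + 1, int j + 1)" and q = "(int k, int j + 1)" and r = "(int k + 1, int j)"])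
      show "Eset a = {(int k + 1, int j + 1), (int k, int j + 1), (int k + 1, int j)}" using j2 by (auto simp: Eset_def)
      show "D (int k + 1, int j + 1) = Z" using supp k by simp
      show "D (int k, int j + 1) \<noteq> Z" using supp k by simp
      show "D (int k, int j + 1) = D (int k + 1, int j)"
        by (rule sgn_eq) (use supp k j2(1)[unfolded gS(3)[of k j] gS(2)[of k j]] in auto)
    qed auto
  qed
  have I: "fI ` SI \<subseteq> interior_nodes D"
  proof
    fix a assume "a \<in> fI ` SI" then obtain i j where ij: "j < n - 1" "i < n-j-2"
       "g i (Suc j) = g (Suc i) (Suc j)" "g (Suc i) (Suc j) = g (Suc i) j" "a = (int i + 1, int j + 1)"
      by (auto simp: SI_def fI_def)
    show "a \<in> interior_nodes D"
    proof (rule mk_int[where p="(int i + 1, int j + 1)" and q = "(int i, int j + 1)" and r = "(int i + 1, int j)"])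
      show "Eset a = {(int i + 1, int j + 1), (int i, int j + 1), (int i + 1, int j)}" using ij by (auto simp: Eset_def)
      show "D (int i, int j + 1) \<noteq> Z" using supp ij by simp
      show "D (int i + 1, int j + 1) = D (int i, int j + 1)"
        by (rule sgn_eq) (use supp ij(1,2) ij(3)[unfolded gS(3)[of i j] gS(1)[of i j]] in auto)
      show "D (int i, int j + 1) = D (int i + 1, int j)"
        by (rule sgn_eq) (use supp ij(1,2) ij(3)[unfolded gS(3)[of i j] gS(1)[of i j]] ij(4)[unfolded gS(1)[of i j] gS(2)[of i j]] in auto)
    qed
  qed
  have finE: "finite (edge_nodes D)" by (rule nodes_finite[OF fin]) (auto simp: edge_nodes_def)
  have finI: "finite (interior_nodes D)" by (rule nodes_finite[OF fin]) (auto simp: interior_nodes_def)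
  have finV: "finite (vertex_nodes D)" by (rule nodes_finite[OF fin]) (auto simp: vertex_nodes_def)
  have injB: "inj_on fB SB" "inj_on fL SL" "inj_on fH SH" "inj_on fI SI"
    by (auto simp: inj_on_def fB_def fL_def fH_def fI_def SH_def)
  have disj: "fB ` SB \<inter> fL ` SL = {}" "(fB ` SB \<union> fL ` SL) \<inter> fH ` SH = {}"
    by (auto simp: fB_def fL_def fH_def SH_def)
  have "card (fB ` SB \<union> fL ` SL \<union> fH ` SH) = card SB + card SL + card SH"
    using disj injB finSB by (simp add: card_Un_disjoint card_image)
  moreover have "card (fB ` SB \<union> fL ` SL \<union> fH ` SH) \<le> card (edge_nodes D)"
    by (rule card_mono[OF finE]) (use B L H in auto)
  ultimately have cE: "card SB + card SL + card SH \<le> card (edge_nodes D)" by simp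
  have cI: "card SI \<le> card (interior_nodes D)"
    using card_mono[OF finI I] card_image[OF injB(4)] by simp
  have v1: "(int n, 0) \<in> vertex_nodes D - bottom_nodes D"
    by (rule mk_vert[where p="(int n, 0)" and q="(int n, -1)" and r="(int n - 1, 0)"])
       (use supp dn in \<open>auto simp: Eset_def\<close>)
  have v2: "(0, int n) \<in> vertex_nodes D - bottom_nodes D"
    by (rule mk_vert[where p="(0, int n)" and q="(-1, int n)" and r="(0, int n - 1)"])
       (use supp dn in \<open>auto simp: Eset_def\<close>)
  have ne: "(int n, 0::int) \<noteq> (0, int n)" using dn by simp
  have sub: "bottom_nodes D \<subseteq> vertex_nodes D - {(int n, 0), (0, int n)}"
  proof -
    have bv: "bottom_nodes D \<subseteq> vertex_nodes D" unfolding bottom_nodes_def by (rule subsetI) (simp only: mem_Collect_eq)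
    show ?thesis using bv v1 v2 by blast
  qed
  have "card (bottom_nodes D) \<le> card (vertex_nodes D - {(int n, 0), (0, int n)})"
    by (rule card_mono[OF _ sub]) (use finV in auto)
  also have "\<dots> = card (vertex_nodes D) - 2"
    using v1 v2 ne finV by (subst card_Diff_subset) auto
  finally have cV: "card (bottom_nodes D) + 2 \<le> card (vertex_nodes D)"
    using card_mono[OF finV, of "{(int n, 0), (0, int n)}"] v1 v2 ne by auto
  have "real n - 1 \<le> real (card (edge_nodes D)) + 2 * real (card (interior_nodes D))"
    using cnt cE cI dn(2) by linarith
  moreover have "real (card (bottom_nodes D)) + 2 \<le> real (card (vertex_nodes D))" using cV by linarith
  moreover have "real_of_int d = real n" using dn by simp
  ultimately show ?thesis unfolding SC_def by (intro arith2) auto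
qed

end
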